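(* Let $R$ be a field, $S$ an idempotent semifield, and $v:R\to S$ a B\'ezout valuation with $v^\circ:R^\circ\to S^\circ$ surjective, and consider the correspondence between ideals $I\subseteq R^\circ$ and $k$-ideals $J\subseteq S^\circ$ given by $J=v(I)$, $I=v^{-1}(J)$. This correspondence preserves radical ideals and primary ideals.
   Context: An idempotent semiring is a commutative semiring with $a+a=a$, ordered by $a\le b$ iff $a+b=b$; a semifield has all nonzero elements invertible. A seminorm $v:R\to S$ satisfies $v(0)=0$, $v(1)=v(-1)=1$, $v(ab)\le v(a)v(b)$, $v(a+b)\le v(a)+v(b)$; a valuation is a multiplicative seminorm with $v(a)\ne0$ for $a\ne0$. $R^\circ=\{a:v(a)\le1\}$, $S^\circ=\{x\le1\}$, $v^\circ=v|_{R^\circ}$. $v$ is B\'ezout if for all $a,b\in R$ there are $x,y\in R^\circ$ with $v(xa+yb)=v(a)+v(b)$. Semiring ideals contain $0$ and are closed under addition and multiplication by semiring elements; a $k$-ideal $I$ satisfies: $a+b\in I$, $a\in I\Rightarrow b\in I$; prime: complement multiplicatively closed; radical: $x^n\in I\Rightarrow x\in I$; primary: $xy\in I$, $x\notin I\Rightarrow y^n\in I$ for some $n$. Under the stated hypotheses the two maps are mutually inverse bijections preserving primes. *)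

theory Defs
  imports Main
begin

definition sle :: "'s::comm_semiring_1 \<Rightarrow> 's \<Rightarrow> bool" where
  "sle a b \<longleftrightarrow> a + b = b"

definition idempotent_semifield :: "'s::comm_semiring_1 itself \<Rightarrow> bool" where
  "idempotent_semifield _ \<longleftrightarrow>
     (\<forall>a::'s. a + a = a) \<and> (\<forall>a::'s. a \<noteq> 0 \<longrightarrow> (\<exists>b. a * b = 1))"

definition seminorm :: "('r::comm_ring_1 \<Rightarrow> 's::comm_semiring_1) \<Rightarrow> bool" where
  "seminorm v \<longleftrightarrow> v 0 = 0 \<and> v 1 = 1 \<and> v (-1) = 1 \<and>
     (\<forall>a b. sle (v (a * b)) (v a * v b)) \<and>
     (\<forall>a b. sle (v (a + b)) (v a + v b))"

definition valuation :: "('r::comm_ring_1 \<Rightarrow> 's::comm_semiring_1) \<Rightarrow> bool" where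
  "valuation v \<longleftrightarrow> seminorm v \<and> (\<forall>a b. v (a * b) = v a * v b) \<and>
     (\<forall>a. a \<noteq> 0 \<longrightarrow> v a \<noteq> 0)"

definition Rcirc :: "('r::comm_ring_1 \<Rightarrow> 's::comm_semiring_1) \<Rightarrow> 'r set" where
  "Rcirc v = {a. sle (v a) 1}"

definition Scirc :: "'s::comm_semiring_1 set" where
  "Scirc = {x. sle x 1}"

definition bezout :: "('r::comm_ring_1 \<Rightarrow> 's::comm_semiring_1) \<Rightarrow> bool" where
  "bezout v \<longleftrightarrow> (\<forall>a b. \<exists>x\<in>Rcirc v. \<exists>y\<in>Rcirc v. v (x * a + y * b) = v a + v b)"

definition ring_ideal_circ :: "('r::comm_ring_1 \<Rightarrow> 's::comm_semiring_1) \<Rightarrow> 'r set \<Rightarrow> bool" where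
  "ring_ideal_circ v I \<longleftrightarrow> I \<subseteq> Rcirc v \<and> 0 \<in> I \<and>
     (\<forall>a\<in>I. \<forall>b\<in>I. a + b \<in> I) \<and> (\<forall>a\<in>I. -a \<in> I) \<and>
     (\<forall>r\<in>Rcirc v. \<forall>a\<in>I. r * a \<in> I)"

definition ring_radical_circ :: "('r::comm_ring_1 \<Rightarrow> 's::comm_semiring_1) \<Rightarrow> 'r set \<Rightarrow> bool" where
  "ring_radical_circ v I \<longleftrightarrow>
     (\<forall>x\<in>Rcirc v. \<forall>n::nat. n > 0 \<longrightarrow> x ^ n \<in> I \<longrightarrow> x \<in> I)"

definition ring_primary_circ :: "('r::comm_ring_1 \<Rightarrow> 's::comm_semiring_1) \<Rightarrow> 'r set \<Rightarrow> bool" where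
  "ring_primary_circ v I \<longleftrightarrow>
     (\<forall>x\<in>Rcirc v. \<forall>y\<in>Rcirc v. x * y \<in> I \<longrightarrow> x \<notin> I \<longrightarrow> (\<exists>n::nat. n > 0 \<and> y ^ n \<in> I))"

definition k_ideal_circ :: "'s::comm_semiring_1 set \<Rightarrow> bool" where
  "k_ideal_circ J \<longleftrightarrow> J \<subseteq> Scirc \<and> 0 \<in> J \<and>
     (\<forall>a\<in>J. \<forall>b\<in>J. a + b \<in> J) \<and>
     (\<forall>r\<in>Scirc. \<forall>a\<in>J. r * a \<in> J) \<and>
     (\<forall>a\<in>Scirc. \<forall>b\<in>Scirc. a + b \<in> J \<longrightarrow> a \<in> J \<longrightarrow> b \<in> J)"

definition semi_radical_circ :: "'s::comm_semiring_1 set \<Rightarrow> bool" where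
  "semi_radical_circ J \<longleftrightarrow>
     (\<forall>x\<in>Scirc. \<forall>n::nat. n > 0 \<longrightarrow> x ^ n \<in> J \<longrightarrow> x \<in> J)"

definition semi_primary_circ :: "'s::comm_semiring_1 set \<Rightarrow> bool" where
  "semi_primary_circ J \<longleftrightarrow>
     (\<forall>x\<in>Scirc. \<forall>y\<in>Scirc. x * y \<in> J \<longrightarrow> x \<notin> J \<longrightarrow> (\<exists>n::nat. n > 0 \<and> y ^ n \<in> J))"

end

theory Submission
  imports Defs
begin

lemma vpow:
  assumes "valuation v"
  shows "v (a ^ n) = v a ^ n"
  using assms by (induction n) (auto simp: valuation_def seminorm_def)

lemma saturate:
  fixes v :: "'r::field \<Rightarrow> 's::comm_semiring_1"
  assumes sf: "idempotent_semifield TYPE('s)" and val: "valuation v"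
    and I: "ring_ideal_circ v I" and b: "b \<in> I" and eq: "v c = v b"
  shows "c \<in> I"
proof (cases "b = 0")
  case True
  then have "v c = 0" using eq val by (simp add: valuation_def seminorm_def)
  then have "c = 0" using val unfolding valuation_def by blast
  then show ?thesis using I unfolding ring_ideal_circ_def by blast
next
  case False
  then have nz: "v b \<noteq> 0" using val unfolding valuation_def by blast
  then obtain w where w: "v b * w = 1" using sf unfolding idempotent_semifield_def by blast
  have cdec: "c = (c / b) * b" using False by simp
  have "v (c / b) * v b = v b"
    using val eq cdec unfolding valuation_def by metis
  then have "v (c / b) * v b * w = v b * w" by simp
  then have "v (c / b) = 1" using w by (simp add: mult.assoc)
  moreover have "(1::'s) + 1 = 1" using sf unfolding idempotent_semifield_def by blast
  ultimately have "c / b \<in> Rcirc v" unfolding Rcirc_def sle_def by simp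
  then have "(c / b) * b \<in> I" using I b unfolding ring_ideal_circ_def by blast
  then show ?thesis using cdec by simp
qed

theorem proposition2p14:
  fixes v :: "'r::field \<Rightarrow> 's::comm_semiring_1"
  assumes "idempotent_semifield TYPE('s)"
    and "valuation v" and "bezout v"
    and "v ` Rcirc v = Scirc"
  shows "(\<forall>I. ring_ideal_circ v I \<longrightarrow>
            (ring_radical_circ v I \<longrightarrow> semi_radical_circ (v ` I)) \<and>
            (ring_primary_circ v I \<longrightarrow> semi_primary_circ (v ` I)))
       \<and> (\<forall>J. k_ideal_circ J \<longrightarrow>
            (semi_radical_circ J \<longrightarrow> ring_radical_circ v (v -` J)) \<and>
            (semi_primary_circ J \<longrightarrow> ring_primary_circ v (v -` J)))"
proof (intro conjI allI impI)
  have mult: "\<And>a b. v (a * b) = v a * v b" using assms(2) unfolding valuation_def by blast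
  have vR: "\<And>a. a \<in> Rcirc v \<Longrightarrow> v a \<in> Scirc" using assms(4) by blast
  fix I assume I: "ring_ideal_circ v I"
  have sat: "\<And>b c. b \<in> I \<Longrightarrow> v c = v b \<Longrightarrow> c \<in> I"
    using saturate[OF assms(1,2) I] by blast
  {
    assume R: "ring_radical_circ v I"
    show "semi_radical_circ (v ` I)" unfolding semi_radical_circ_def
    proof (intro ballI allI impI)
      fix x and n :: nat assume x: "x \<in> Scirc" and n: "n > 0" and xn: "x ^ n \<in> v ` I"
      obtain a where a: "a \<in> Rcirc v" "x = v a" using x assms(4) by blast
      obtain b where b: "b \<in> I" "x ^ n = v b" using xn by blast
      have "a ^ n \<in> I" using sat[OF b(1)] b(2) a(2) vpow[OF assms(2)] by metis
      then have "a \<in> I" using R a(1) n unfolding ring_radical_circ_def by blast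
      then show "x \<in> v ` I" using a by blast
    qed
  }
  {
    assume P: "ring_primary_circ v I"
    show "semi_primary_circ (v ` I)" unfolding semi_primary_circ_def
    proof (intro ballI impI)
      fix x y assume x: "x \<in> Scirc" and y: "y \<in> Scirc" and xy: "x * y \<in> v ` I"
        and nx: "x \<notin> v ` I"
      obtain a where a: "a \<in> Rcirc v" "x = v a" using x assms(4) by blast
      obtain b where b: "b \<in> Rcirc v" "y = v b" using y assms(4) by blast
      obtain c where c: "c \<in> I" "x * y = v c" using xy by blast
      have "a * b \<in> I" using sat[OF c(1)] c(2) a(2) b(2) mult by metis
      moreover have "a \<notin> I" using nx a by blast
      ultimately obtain n :: nat where "n > 0" "b ^ n \<in> I"
        using P a(1) b(1) unfolding ring_primary_circ_def by blast
      then show "\<exists>n::nat. n > 0 \<and> y ^ n \<in> v ` I"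
        using b(2) vpow[OF assms(2)] by (metis image_eqI)
    qed
  }
next
  have mult: "\<And>a b. v (a * b) = v a * v b" using assms(2) unfolding valuation_def by blast
  have vR: "\<And>a. a \<in> Rcirc v \<Longrightarrow> v a \<in> Scirc" using assms(4) by blast
  fix J :: "'s set" assume J: "k_ideal_circ J"
  {
    assume R: "semi_radical_circ J"
    show "ring_radical_circ v (v -` J)" unfolding ring_radical_circ_def
    proof (intro ballI allI impI)
      fix x and n :: nat assume x: "x \<in> Rcirc v" and n: "n > 0" and xn: "x ^ n \<in> v -` J"
      have "v x ^ n \<in> J" using xn vpow[OF assms(2)] by simp
      then show "x \<in> v -` J" using R vR[OF x] n unfolding semi_radical_circ_def by blast
    qed
  }
  {
    assume P: "semi_primary_circ J"
    show "ring_primary_circ v (v -` J)" unfolding ring_primary_circ_def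
    proof (intro ballI impI)
      fix x y assume x: "x \<in> Rcirc v" and y: "y \<in> Rcirc v" and xy: "x * y \<in> v -` J"
        and nx: "x \<notin> v -` J"
      have "v x * v y \<in> J" using xy mult by simp
      then obtain n :: nat where "n > 0" "v y ^ n \<in> J"
        using P vR[OF x] vR[OF y] nx unfolding semi_primary_circ_def by blast
      then show "\<exists>n::nat. n > 0 \<and> y ^ n \<in> v -` J" using vpow[OF assms(2)] by auto
    qed
  }
qed

end
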